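(* Let $\mathcal{M}=\{\mathcal{M}_k\}$ be an $n$-qudit quantum instrument and let $\tilde\nu_{s,t}=\tilde\nu_{s,t}(\mathcal{M})$. Let $\hat{\mathcal{M}}=\{\hat{\mathcal{M}}_k\}$ be the randomly compiled instrument $$\hat{\mathcal{M}}_k=d^{-3n}\sum_{a,b,x\in\mathbb{Z}_d^n}\mathcal{X}^{x}\circ\mathcal{Z}^{a}\circ\mathcal{M}_{k-x}\circ\mathcal{Z}^{b}\circ\mathcal{X}^{-x}.$$ Then for every $k\in\mathbb{Z}_d^n$ and every operator $\rho$, $$\hat{\mathcal{M}}_k(\rho)=d^{-2n}\sum_{s,t\in\mathbb{Z}_d^n}\chi_k(s-t)\,\tilde\nu_{s,t}\,\operatorname{tr}\!\big((Z^s)^\dagger\rho\big)\,Z^t .$$ Equivalently, $$\hat{\mathcal{M}}_k(\rho)=\sum_{a,b\in\mathbb{Z}_d^n}\nu_{a,b}\,\langle k+a|\rho|k+a\rangle\,|k+b\rangle\langle k+b|,$$ where $$\nu_{a,b}=d^{-2n}\sum_{s,t\in\mathbb{Z}_d^n}\tilde\nu_{s,t}\,\chi_s(a)^*\chi_t(b).$$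
   Context: Let $d,n$ be positive integers. All arithmetic on $\mathbb{Z}_d^n$ is componentwise modulo $d$. For $z,j\in\mathbb{Z}_d^n$ let $\chi_z(j)=\exp(2\pi i\, z\cdot j/d)$. Let $\{|j\rangle: j\in\mathbb{Z}_d^n\}$ be the computational basis. Define $X^x=\sum_j |j+x\rangle\langle j|$ and $Z^z=\sum_j \chi_z(j)|j\rangle\langle j|$ for $x,z\in\mathbb{Z}_d^n$. For an operator $A$, $\mathcal{A}$ denotes the map $\rho\mapsto A\rho A^\dagger$. Maps are composed right to left and extended linearly to all operators. An $n$-qudit quantum instrument is a family $\{\mathcal{M}_k\}_{k\in\mathbb{Z}_d^n}$ of completely positive trace-non-increasing maps whose sum is trace preserving; outcome $k$ is reported with unnormalized post-measurement state $\mathcal{M}_k(\rho)$. The generalized Pauli fidelities are $$\tilde\nu_{s,t}(\mathcal{M})=d^{-n}\sum_{k}\chi_k(s-t)^*\operatorname{tr}\!\big((Z^t)^\dagger\mathcal{M}_k(Z^s)\big).$$ *)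

theory Defs
  imports Complex_Main
begin

text \<open>Z_d^n is modelled as functions 'n => int (with 'n a finite index type, n = card (UNIV :: 'n set))
  with all entries in {0..<d}. Operators on the n-qudit space are complex-valued functions
  of two basis labels; only entries indexed by Z_d^n are meaningful.\<close>

type_synonym 'n lbl = "'n \<Rightarrow> int"
type_synonym 'n op = "'n lbl \<Rightarrow> 'n lbl \<Rightarrow> complex"

definition Zdn :: "int \<Rightarrow> ('n::finite) lbl set" where
  "Zdn d = {j. \<forall>i. 0 \<le> j i \<and> j i < d}"

definition vadd :: "int \<Rightarrow> ('n::finite) lbl \<Rightarrow> 'n lbl \<Rightarrow> 'n lbl" where
  "vadd d x y = (\<lambda>i. (x i + y i) mod d)"

definition vsub :: "int \<Rightarrow> ('n::finite) lbl \<Rightarrow> 'n lbl \<Rightarrow> 'n lbl" where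
  "vsub d x y = (\<lambda>i. (x i - y i) mod d)"

definition vneg :: "int \<Rightarrow> ('n::finite) lbl \<Rightarrow> 'n lbl" where
  "vneg d x = (\<lambda>i. (- x i) mod d)"

definition chi :: "int \<Rightarrow> ('n::finite) lbl \<Rightarrow> 'n lbl \<Rightarrow> complex" where
  "chi d z j = cis (2 * pi * of_int (\<Sum>i\<in>UNIV. z i * j i) / of_int d)"

definition is_op :: "int \<Rightarrow> ('n::finite) op \<Rightarrow> bool" where
  "is_op d A \<longleftrightarrow> (\<forall>j l. (j \<notin> Zdn d \<or> l \<notin> Zdn d) \<longrightarrow> A j l = 0)"

definition mmul :: "int \<Rightarrow> ('n::finite) op \<Rightarrow> 'n op \<Rightarrow> 'n op" where
  "mmul d A B = (\<lambda>j l. \<Sum>m\<in>Zdn d. A j m * B m l)"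

definition adj :: "('n::finite) op \<Rightarrow> 'n op" where
  "adj A = (\<lambda>j l. cnj (A l j))"

definition tr :: "int \<Rightarrow> ('n::finite) op \<Rightarrow> complex" where
  "tr d A = (\<Sum>j\<in>Zdn d. A j j)"

definition conjm :: "int \<Rightarrow> ('n::finite) op \<Rightarrow> 'n op \<Rightarrow> 'n op" where
  "conjm d A \<rho> = mmul d (mmul d A \<rho>) (adj A)"

definition Xop :: "int \<Rightarrow> ('n::finite) lbl \<Rightarrow> 'n op" where
  "Xop d x = (\<lambda>j l. if j \<in> Zdn d \<and> l \<in> Zdn d \<and> j = vadd d l x then 1 else 0)"

definition Zop :: "int \<Rightarrow> ('n::finite) lbl \<Rightarrow> 'n op" where
  "Zop d z = (\<lambda>j l. if j \<in> Zdn d \<and> l = j then chi d z j else 0)"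

definition ketbra :: "int \<Rightarrow> ('n::finite) lbl \<Rightarrow> 'n lbl \<Rightarrow> 'n op" where
  "ketbra d a b = (\<lambda>j l. if j = a \<and> l = b \<and> a \<in> Zdn d \<and> b \<in> Zdn d then 1 else 0)"

definition psd_on :: "'i set \<Rightarrow> ('i \<Rightarrow> 'i \<Rightarrow> complex) \<Rightarrow> bool" where
  "psd_on S A \<longleftrightarrow> (\<forall>p q. (p \<notin> S \<or> q \<notin> S) \<longrightarrow> A p q = 0) \<and>
     (\<forall>v. (\<Sum>p\<in>S. \<Sum>q\<in>S. cnj (v p) * A p q * v q) \<in> \<real> \<and>
          0 \<le> Re (\<Sum>p\<in>S. \<Sum>q\<in>S. cnj (v p) * A p q * v q))"

definition linear_map :: "int \<Rightarrow> (('n::finite) op \<Rightarrow> 'n op) \<Rightarrow> bool" where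
  "linear_map d M \<longleftrightarrow>
     (\<forall>A. is_op d A \<longrightarrow> is_op d (M A)) \<and>
     (\<forall>A B c. is_op d A \<longrightarrow> is_op d B \<longrightarrow>
        M (\<lambda>j l. A j l + c * B j l) = (\<lambda>j l. M A j l + c * M B j l))"

text \<open>id_m \<otimes> M applied to a block operator on C^m \<otimes> (C^d)^{\<otimes>n}.\<close>
definition ampl :: "nat \<Rightarrow> (('n::finite) op \<Rightarrow> 'n op)
    \<Rightarrow> (nat \<times> 'n lbl \<Rightarrow> nat \<times> 'n lbl \<Rightarrow> complex) \<Rightarrow> (nat \<times> 'n lbl \<Rightarrow> nat \<times> 'n lbl \<Rightarrow> complex)" where
  "ampl m M X = (\<lambda>(a, j) (b, l). if a < m \<and> b < m then M (\<lambda>j' l'. X (a, j') (b, l')) j l else 0)"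

definition completely_positive :: "int \<Rightarrow> (('n::finite) op \<Rightarrow> 'n op) \<Rightarrow> bool" where
  "completely_positive d M \<longleftrightarrow> linear_map d M \<and>
     (\<forall>m X. psd_on ({..<m} \<times> Zdn d) X \<longrightarrow> psd_on ({..<m} \<times> Zdn d) (ampl m M X))"

definition trace_nonincreasing :: "int \<Rightarrow> (('n::finite) op \<Rightarrow> 'n op) \<Rightarrow> bool" where
  "trace_nonincreasing d M \<longleftrightarrow> (\<forall>\<rho>. psd_on (Zdn d) \<rho> \<longrightarrow> Re (tr d (M \<rho>)) \<le> Re (tr d \<rho>))"

definition quantum_instrument :: "int \<Rightarrow> (('n::finite) lbl \<Rightarrow> 'n op \<Rightarrow> 'n op) \<Rightarrow> bool" where
  "quantum_instrument d M \<longleftrightarrow>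
     (\<forall>k\<in>Zdn d. completely_positive d (M k) \<and> trace_nonincreasing d (M k)) \<and>
     (\<forall>\<rho>. is_op d \<rho> \<longrightarrow> tr d (\<lambda>j l. \<Sum>k\<in>Zdn d. M k \<rho> j l) = tr d \<rho>)"

definition nu_tilde :: "int \<Rightarrow> (('n::finite) lbl \<Rightarrow> 'n op \<Rightarrow> 'n op) \<Rightarrow> 'n lbl \<Rightarrow> 'n lbl \<Rightarrow> complex" where
  "nu_tilde d M s t = (1 / of_int d ^ card (UNIV :: 'n set)) *
     (\<Sum>k\<in>Zdn d. cnj (chi d k (vsub d s t)) * tr d (mmul d (adj (Zop d t)) (M k (Zop d s))))"

definition compiled :: "int \<Rightarrow> (('n::finite) lbl \<Rightarrow> 'n op \<Rightarrow> 'n op) \<Rightarrow> 'n lbl \<Rightarrow> 'n op \<Rightarrow> 'n op" where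
  "compiled d M k \<rho> = (\<lambda>j l. (1 / of_int d ^ (3 * card (UNIV :: 'n set))) *
     (\<Sum>a\<in>Zdn d. \<Sum>b\<in>Zdn d. \<Sum>x\<in>Zdn d.
        conjm d (Xop d x) (conjm d (Zop d a)
          (M (vsub d k x) (conjm d (Zop d b) (conjm d (Xop d (vneg d x)) \<rho>)))) j l))"

definition nu :: "int \<Rightarrow> (('n::finite) lbl \<Rightarrow> 'n op \<Rightarrow> 'n op) \<Rightarrow> 'n lbl \<Rightarrow> 'n lbl \<Rightarrow> complex" where
  "nu d M a b = (1 / of_int d ^ (2 * card (UNIV :: 'n set))) *
     (\<Sum>s\<in>Zdn d. \<Sum>t\<in>Zdn d. nu_tilde d M s t * cnj (chi d s a) * chi d t b)"

end

theory Submission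
  imports Defs "HOL-Library.FuncSet" "HOL-Library.Real_Mod"
begin

definition ee :: "int \<Rightarrow> int \<Rightarrow> complex" where
  "ee d x = cis (2 * pi * of_int x / of_int d)"

definition dot :: "('n::finite) lbl \<Rightarrow> 'n lbl \<Rightarrow> int" where
  "dot z j = (\<Sum>i\<in>UNIV. z i * j i)"

lemma chi_ee: "chi d z j = ee d (dot z j)"
  by (simp add: chi_def ee_def dot_def)

lemma ee_add: "ee d (x + y) = ee d x * ee d y"
  by (simp add: ee_def cis_mult add_divide_distrib distrib_left)

lemma ee_diff: "ee d (x - y) = ee d x * cnj (ee d y)"
  by (simp add: ee_def cis_mult cis_cnj diff_divide_distrib right_diff_distrib)

lemma ee_neg: "ee d (- x) = cnj (ee d x)"
  by (simp add: ee_def cis_cnj)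

lemma ee_0[simp]: "ee d 0 = 1"
  by (simp add: ee_def)

lemma ee_cong:
  assumes "d \<ge> 1" "d dvd (x - y)"
  shows "ee d x = ee d y"
proof -
  obtain q where q: "x = y + d * q" using assms(2) by (metis add.commute diff_add_cancel dvdE)
  have eq: "2*pi*of_int x/of_int d = 2*pi*of_int y/of_int d + 2*pi*of_int q"
    using assms(1) by (simp add: q field_simps)
  have "ee d x = cis (2*pi*of_int y/of_int d + 2*pi*of_int q)" by (simp only: ee_def eq)
  also have "\<dots> = ee d y * cis (2*pi*of_int q)" by (simp only: ee_def cis_mult)
  finally show ?thesis by simp
qed

lemma ee_eq_1:
  assumes "d \<ge> 1" "ee d x = 1"
  shows "d dvd x"
proof -
  obtain n where n: "2 * pi * of_int x / of_int d = of_int n * (2 * pi)"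
    using assms(2) cis_eq_1_iff unfolding ee_def by blast
  hence "real_of_int x = of_int n * of_int d" using assms(1)
    by (simp add: field_simps)
  hence "x = n * d" by (metis of_int_eq_iff of_int_mult)
  thus ?thesis by simp
qed

lemma Zdn_PiE: "Zdn d = PiE UNIV (\<lambda>_. {0..<d})"
  by (auto simp: Zdn_def PiE_def Pi_def extensional_def)

lemma finite_Zdn[simp]: "finite (Zdn d)"
  unfolding Zdn_PiE by (intro finite_PiE) auto

lemma card_Zdn: "d \<ge> 0 \<Longrightarrow> (of_nat (card (Zdn d :: ('n::finite) lbl set)) :: complex) = of_int d ^ card (UNIV :: 'n set)"
  unfolding Zdn_PiE by (simp add: card_PiE)

lemma Zdn_mod: "m \<in> Zdn d \<Longrightarrow> m i mod d = m i"
  by (simp add: Zdn_def)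

lemma Zdn_modf: "m \<in> Zdn d \<Longrightarrow> (\<lambda>i. m i mod d) = m"
  by (simp add: Zdn_def)

lemma vadd_Zdn[simp]: "d \<ge> 1 \<Longrightarrow> vadd d x y \<in> Zdn d"
  by (simp add: Zdn_def vadd_def)
lemma vsub_Zdn[simp]: "d \<ge> 1 \<Longrightarrow> vsub d x y \<in> Zdn d"
  by (simp add: Zdn_def vsub_def)
lemma vneg_Zdn[simp]: "d \<ge> 1 \<Longrightarrow> vneg d x \<in> Zdn d"
  by (simp add: Zdn_def vneg_def)

lemma dot_cong:
  assumes "\<And>i. d dvd (a i - b i)"
  shows "d dvd (dot z a - dot z b)"
proof -
  have "dot z a - dot z b = (\<Sum>i\<in>UNIV. z i * (a i - b i))"
    by (simp add: dot_def sum_subtractf right_diff_distrib)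
  thus ?thesis using assms by (simp add: dvd_sum)
qed

lemma dot_comm: "dot z j = dot j z"
  by (simp add: dot_def mult.commute)

lemma vsub_vadd: "m \<in> Zdn d \<Longrightarrow> vsub d (vadd d m c) c = m"
  by (rule ext) (simp add: vadd_def vsub_def mod_simps Zdn_mod)

lemma vadd_vsub: "m \<in> Zdn d \<Longrightarrow> vadd d (vsub d m c) c = m"
  by (rule ext) (simp add: vadd_def vsub_def mod_simps Zdn_mod)

lemma bij_shift: "d \<ge> 1 \<Longrightarrow> bij_betw (\<lambda>s. vadd d s c) (Zdn d) (Zdn d)"
  by (rule bij_betwI[where g="\<lambda>s. vsub d s c"]) (auto simp: vsub_vadd vadd_vsub)

lemma sum_shift: "d \<ge> 1 \<Longrightarrow> (\<Sum>s\<in>Zdn d. f (vadd d s c)) = (\<Sum>s\<in>Zdn d. f s)"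
  using sum.reindex_bij_betw[OF bij_shift] by blast

lemma sum_const_Zdn: "d \<ge> 1 \<Longrightarrow> (\<Sum>s\<in>(Zdn d :: ('n::finite) lbl set). (1::complex)) = of_int d ^ card (UNIV :: 'n set)"
  using card_Zdn[of d] by simp

lemma orth:
  fixes w :: "('n::finite) lbl"
  assumes d: "d \<ge> 1"
  shows "(\<Sum>s\<in>Zdn d. ee d (dot s w)) = (if \<forall>i. d dvd w i then of_int d ^ card (UNIV :: 'n set) else 0)"
proof (cases "\<forall>i. d dvd w i")
  case True
  have "\<And>s. ee d (dot s w) = 1"
  proof -
    fix s
    have "d dvd (dot s w - dot s (\<lambda>_. 0))" using True by (intro dot_cong) simp
    hence "d dvd dot s w" by (simp add: dot_def)
    thus "ee d (dot s w) = 1" using ee_cong[OF d, of "dot s w" 0] by simp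
  qed
  thus ?thesis using True sum_const_Zdn[OF d, where 'n='n] by simp
next
  case False
  then obtain i0 where i0: "\<not> d dvd w i0" by blast
  define \<delta> :: "'n lbl" where "\<delta> = (\<lambda>i. if i = i0 then 1 else 0)"
  have key: "ee d (dot (vadd d s \<delta>) w) = ee d (w i0) * ee d (dot s w)" for s
  proof -
    have "d dvd (dot w (vadd d s \<delta>) - dot w (\<lambda>i. s i + \<delta> i))"
      by (intro dot_cong) (simp add: vadd_def mod_eq_dvd_iff[symmetric] mod_simps)
    hence 1: "ee d (dot (vadd d s \<delta>) w) = ee d (dot w (\<lambda>i. s i + \<delta> i))"
      using ee_cong[OF d] dot_comm by metis
    have dl: "(\<lambda>i. w i * \<delta> i) = (\<lambda>i. if i = i0 then w i else 0)" by (auto simp: \<delta>_def)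
    have "dot w (\<lambda>i. s i + \<delta> i) = (\<Sum>i\<in>UNIV. w i * \<delta> i) + dot s w"
      by (simp add: dot_def distrib_left sum.distrib mult.commute)
    also have "(\<Sum>i\<in>UNIV. w i * \<delta> i) = w i0" unfolding dl by simp
    finally have 2: "dot w (\<lambda>i. s i + \<delta> i) = w i0 + dot s w" .
    show ?thesis by (simp add: 1 2 ee_add)
  qed
  let ?S = "\<Sum>s\<in>Zdn d. ee d (dot s w)"
  have "?S = (\<Sum>s\<in>Zdn d. ee d (dot (vadd d s \<delta>) w))"
    using sum_shift[OF d, of "\<lambda>s. ee d (dot s w)" \<delta>] by simp
  also have "\<dots> = ee d (w i0) * ?S" by (simp add: key sum_distrib_left)
  finally have "(1 - ee d (w i0)) * ?S = 0" by (simp add: algebra_simps)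
  moreover have "ee d (w i0) \<noteq> 1" using ee_eq_1[OF d] i0 by blast
  ultimately have "?S = 0" by simp
  thus ?thesis by (simp only: if_not_P[OF False])
qed

lemma zdn_dvd_eq:
  assumes "j \<in> Zdn d" "l \<in> Zdn d"
  shows "(\<forall>i. d dvd (j i - l i)) \<longleftrightarrow> j = l"
proof
  assume "\<forall>i. d dvd (j i - l i)"
  hence "\<And>i. j i mod d = l i mod d" by (simp add: mod_eq_dvd_iff)
  thus "j = l" using assms by (auto simp: Zdn_mod)
qed simp

lemma chi_orth:
  fixes p q :: "('n::finite) lbl"
  assumes d: "d \<ge> 1" and "p \<in> Zdn d" "q \<in> Zdn d"
  shows "(\<Sum>a\<in>Zdn d. chi d a p * cnj (chi d a q)) = (if p = q then of_int d ^ card (UNIV :: 'n set) else 0)"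
proof -
  have "\<And>a. chi d a p * cnj (chi d a q) = ee d (dot a (\<lambda>i. p i - q i))"
    by (simp add: chi_ee ee_diff[symmetric] dot_def right_diff_distrib sum_subtractf)
  hence "(\<Sum>a\<in>Zdn d. chi d a p * cnj (chi d a q)) = (\<Sum>a\<in>Zdn d. ee d (dot a (\<lambda>i. p i - q i)))" by simp
  also have "\<dots> = (if p = q then of_int d ^ card (UNIV :: 'n set) else 0)"
    by (simp only: orth[OF d] zdn_dvd_eq[OF assms(2,3)])
  finally show ?thesis .
qed

lemma lin0:
  assumes "linear_map d N"
  shows "N (\<lambda>j l. 0) = (\<lambda>j l. 0)"
proof -
  have z: "is_op d (\<lambda>j l. 0)" by (simp add: is_op_def)
  have "N (\<lambda>j l. 0 + 1 * 0) = (\<lambda>j l. N (\<lambda>j l. 0) j l + 1 * N (\<lambda>j l. 0) j l)"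
    using assms z unfolding linear_map_def by blast
  hence "\<And>j l. N (\<lambda>j l. 0) j l = N (\<lambda>j l. 0) j l + N (\<lambda>j l. 0) j l" by (simp add: fun_eq_iff)
  thus ?thesis by (simp add: fun_eq_iff)
qed

lemma is_op_sum:
  assumes "\<forall>m\<in>S. is_op d (A m)"
  shows "is_op d (\<lambda>j l. \<Sum>m\<in>S. c m * A m j l)"
  using assms by (simp add: is_op_def)

lemma lin_sum:
  assumes lin: "linear_map d N" and fin: "finite S" and ops: "\<forall>m\<in>S. is_op d (A m)"
  shows "N (\<lambda>j l. \<Sum>m\<in>S. c m * A m j l) = (\<lambda>j l. \<Sum>m\<in>S. c m * N (A m) j l)"
  using fin ops
proof (induction S rule: finite_induct)
  case empty
  then show ?case using lin0[OF lin] by simp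
next
  case (insert x F)
  have o1: "is_op d (\<lambda>j l. \<Sum>m\<in>F. c m * A m j l)" using insert by (intro is_op_sum) auto
  have o2: "is_op d (A x)" using insert by auto
  have "N (\<lambda>j l. \<Sum>m\<in>insert x F. c m * A m j l) = N (\<lambda>j l. (\<Sum>m\<in>F. c m * A m j l) + c x * A x j l)"
    using insert by (simp add: add.commute)
  also have "\<dots> = (\<lambda>j l. N (\<lambda>j l. \<Sum>m\<in>F. c m * A m j l) j l + c x * N (A x) j l)"
    using lin o1 o2 unfolding linear_map_def by blast
  also have "\<dots> = (\<lambda>j l. \<Sum>m\<in>insert x F. c m * N (A m) j l)"
    using insert by (simp add: add.commute)
  finally show ?case .
qed

lemma vadd_eq_iff:
  assumes "d \<ge> 1" "j \<in> Zdn d" "p \<in> Zdn d"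
  shows "(j = vadd d p x) \<longleftrightarrow> (p = vsub d j x)"
  using assms vadd_vsub vsub_vadd by metis

lemma conjX:
  fixes x :: "('n::finite) lbl" and \<sigma> :: "'n op"
  assumes d: "d \<ge> 1"
  shows "conjm d (Xop d x) \<sigma> = (\<lambda>j l. if j \<in> Zdn d \<and> l \<in> Zdn d then \<sigma> (vsub d j x) (vsub d l x) else 0)"
proof -
  have m1: "mmul d (Xop d x) \<sigma> = (\<lambda>j m. if j \<in> Zdn d then \<sigma> (vsub d j x) m else 0)"
  proof (intro ext)
    fix j m
    have "mmul d (Xop d x) \<sigma> j m = (\<Sum>p\<in>Zdn d. if p = vsub d j x \<and> j \<in> Zdn d then \<sigma> p m else 0)"
      unfolding mmul_def Xop_def
    proof (intro sum.cong refl)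
      fix p :: "'n lbl" assume p: "p \<in> Zdn d"
      show "(if j \<in> Zdn d \<and> p \<in> Zdn d \<and> j = vadd d p x then 1 else 0) * \<sigma> p m =
          (if p = vsub d j x \<and> j \<in> Zdn d then \<sigma> p m else 0)"
        by (cases "j \<in> Zdn d") (simp_all add: p vadd_eq_iff[OF d _ p])
    qed
    also have "\<dots> = (if j \<in> Zdn d then \<sigma> (vsub d j x) m else 0)"
      using d by (simp add: sum.delta)
    finally show "mmul d (Xop d x) \<sigma> j m = (if j \<in> Zdn d then \<sigma> (vsub d j x) m else 0)" .
  qed
  show ?thesis
  proof (intro ext)
    fix j l
    have "conjm d (Xop d x) \<sigma> j l = (\<Sum>p\<in>Zdn d. if p = vsub d l x \<and> l \<in> Zdn d \<and> j \<in> Zdn d then \<sigma> (vsub d j x) p else 0)"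
      unfolding conjm_def m1
      unfolding mmul_def adj_def Xop_def
    proof (intro sum.cong refl)
      fix p :: "'n lbl" assume p: "p \<in> Zdn d"
      show "(if j \<in> Zdn d then \<sigma> (vsub d j x) p else 0) * cnj (if l \<in> Zdn d \<and> p \<in> Zdn d \<and> l = vadd d p x then 1 else 0) =
          (if p = vsub d l x \<and> l \<in> Zdn d \<and> j \<in> Zdn d then \<sigma> (vsub d j x) p else 0)"
        by (cases "l \<in> Zdn d") (auto simp: p vadd_eq_iff[OF d _ p])
    qed
    also have "\<dots> = (if j \<in> Zdn d \<and> l \<in> Zdn d then \<sigma> (vsub d j x) (vsub d l x) else 0)"
      using d apply (cases "j \<in> Zdn d \<and> l \<in> Zdn d")
       apply (simp add: sum.delta)
      apply (auto intro!: sum.neutral)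
      done
    finally show "conjm d (Xop d x) \<sigma> j l = (if j \<in> Zdn d \<and> l \<in> Zdn d then \<sigma> (vsub d j x) (vsub d l x) else 0)" .
  qed
qed

lemma cnj_if: "cnj (if P then a else b) = (if P then cnj a else cnj b)" by simp
lemma mult_if0: "(x::complex) * (if P then y else 0) = (if P then x * y else 0)" by simp
lemma if0_mult: "(if P then y else 0) * (x::complex) = (if P then y * x else 0)" by simp

lemma conjZ:
  fixes a :: "('n::finite) lbl" and \<sigma> :: "'n op"
  shows "conjm d (Zop d a) \<sigma> = (\<lambda>j l. if j \<in> Zdn d \<and> l \<in> Zdn d then chi d a j * \<sigma> j l * cnj (chi d a l) else 0)"
proof (intro ext)
  fix j l
  have m1: "mmul d (Zop d a) \<sigma> = (\<lambda>j m. if j \<in> Zdn d then chi d a j * \<sigma> j m else 0)"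
    unfolding mmul_def Zop_def by (intro ext) (simp add: if_distrib[of "\<lambda>x. x * _"] sum.delta cong: if_cong)
  show "conjm d (Zop d a) \<sigma> j l = (if j \<in> Zdn d \<and> l \<in> Zdn d then chi d a j * \<sigma> j l * cnj (chi d a l) else 0)"
    unfolding conjm_def m1
    unfolding mmul_def adj_def Zop_def
    by (simp add: cnj_if mult_if0 if0_mult sum.delta cong: if_cong)
qed

lemma conjZ_pt: "p \<in> Zdn d \<Longrightarrow> q \<in> Zdn d \<Longrightarrow> conjm d (Zop d a) Y p q = chi d a p * Y p q * cnj (chi d a q)"
  by (simp add: conjZ)

lemma is_op_conjZ: "is_op d (conjm d (Zop d b) \<tau>)"
  by (simp add: conjZ is_op_def)

lemma is_op_ketbra: "is_op d (ketbra d m m)"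
  by (simp add: ketbra_def is_op_def)

lemma ztwirl_in:
  fixes \<tau> :: "('n::finite) op"
  assumes d: "d \<ge> 1"
  shows "(\<lambda>j l. \<Sum>b\<in>Zdn d. 1 * conjm d (Zop d b) \<tau> j l) =
     (\<lambda>j l. \<Sum>m\<in>Zdn d. (of_int d ^ card (UNIV :: 'n set) * \<tau> m m) * ketbra d m m j l)"
proof (intro ext)
  fix j l :: "'n lbl"
  show "(\<Sum>b\<in>Zdn d. 1 * conjm d (Zop d b) \<tau> j l) =
     (\<Sum>m\<in>Zdn d. (of_int d ^ card (UNIV :: 'n set) * \<tau> m m) * ketbra d m m j l)"
  proof (cases "j \<in> Zdn d \<and> l \<in> Zdn d")
    case True
    have "(\<Sum>b\<in>Zdn d. 1 * conjm d (Zop d b) \<tau> j l) = \<tau> j l * (\<Sum>b\<in>Zdn d. chi d b j * cnj (chi d b l))"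
      using True by (simp add: conjZ sum_distrib_left mult_ac)
    also have "\<dots> = (if j = l then of_int d ^ card (UNIV :: 'n set) * \<tau> j j else 0)"
      using True chi_orth[OF d, of j l] by simp
    also have "\<dots> = (\<Sum>m\<in>Zdn d. (of_int d ^ card (UNIV :: 'n set) * \<tau> m m) * ketbra d m m j l)"
      using True by (cases "j = l") (auto simp: ketbra_def mult_if0 sum.delta intro!: sum.neutral)
    finally show ?thesis .
  next
    case False
    thus ?thesis by (auto simp: conjZ ketbra_def intro!: sum.neutral)
  qed
qed

lemma twirl_full:
  fixes \<tau> :: "('n::finite) op"
  assumes d: "d \<ge> 1" and lin: "linear_map d N"
  shows "(\<Sum>a\<in>Zdn d. \<Sum>b\<in>Zdn d. conjm d (Zop d a) (N (conjm d (Zop d b) \<tau>)) p q) =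
    (if p \<in> Zdn d \<and> q \<in> Zdn d \<and> p = q then of_int d ^ card (UNIV :: 'n set) *
       (\<Sum>m\<in>Zdn d. (of_int d ^ card (UNIV :: 'n set) * \<tau> m m) * N (ketbra d m m) p p) else 0)"
proof (cases "p \<in> Zdn d \<and> q \<in> Zdn d")
  case True
  have Ysum: "(\<Sum>b\<in>Zdn d. N (conjm d (Zop d b) \<tau>) p q) =
     (\<Sum>m\<in>Zdn d. (of_int d ^ card (UNIV :: 'n set) * \<tau> m m) * N (ketbra d m m) p q)"
  proof -
    have ops: "\<forall>b\<in>Zdn d. is_op d (conjm d (Zop d b) \<tau>)" by (simp add: is_op_conjZ)
    have ops2: "\<forall>m\<in>Zdn d. is_op d (ketbra d m m)" by (simp add: is_op_ketbra)
    have "(\<Sum>b\<in>Zdn d. N (conjm d (Zop d b) \<tau>) p q) = N (\<lambda>j l. \<Sum>b\<in>Zdn d. 1 * conjm d (Zop d b) \<tau> j l) p q"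
      using lin_sum[OF lin finite_Zdn[of d] ops, of "\<lambda>_. 1"] by simp
    also have "\<dots> = N (\<lambda>j l. \<Sum>m\<in>Zdn d. (of_int d ^ card (UNIV :: 'n set) * \<tau> m m) * ketbra d m m j l) p q"
      by (simp only: ztwirl_in[OF d])
    also have "\<dots> = (\<Sum>m\<in>Zdn d. (of_int d ^ card (UNIV :: 'n set) * \<tau> m m) * N (ketbra d m m) p q)"
      using lin_sum[OF lin finite_Zdn[of d] ops2] by simp
    finally show ?thesis .
  qed
  have "(\<Sum>a\<in>Zdn d. \<Sum>b\<in>Zdn d. conjm d (Zop d a) (N (conjm d (Zop d b) \<tau>)) p q)
     = (\<Sum>a\<in>Zdn d. chi d a p * cnj (chi d a q)) * (\<Sum>b\<in>Zdn d. N (conjm d (Zop d b) \<tau>) p q)"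
    using True by (simp add: conjZ_pt sum_distrib_left sum_distrib_right mult_ac)
  also have "\<dots> = (if p = q then of_int d ^ card (UNIV :: 'n set) else 0) * (\<Sum>b\<in>Zdn d. N (conjm d (Zop d b) \<tau>) p q)"
    using True chi_orth[OF d, of p q] by simp
  finally show ?thesis using True Ysum by simp
next
  case False
  thus ?thesis by (auto simp: conjZ intro!: sum.neutral)
qed

lemma qi_lin: "quantum_instrument d M \<Longrightarrow> k \<in> Zdn d \<Longrightarrow> linear_map d (M k)"
  by (simp add: quantum_instrument_def completely_positive_def)

lemma vsub_vneg: "vsub d m (vneg d x) = vadd d m x"
  by (rule ext) (simp add: vsub_def vneg_def vadd_def mod_simps)

lemma vsub_inj: "d \<ge> 1 \<Longrightarrow> j \<in> Zdn d \<Longrightarrow> l \<in> Zdn d \<Longrightarrow> (vsub d j x = vsub d l x) \<longleftrightarrow> j = l"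
  by (metis vadd_vsub)

lemma swap3: "(\<Sum>a\<in>A. \<Sum>b\<in>B. \<Sum>x\<in>C. F a b x) = (\<Sum>x\<in>C. \<Sum>a\<in>A. \<Sum>b\<in>B. (F a b x :: complex))"
proof -
  have "(\<Sum>a\<in>A. \<Sum>b\<in>B. \<Sum>x\<in>C. F a b x) = (\<Sum>a\<in>A. \<Sum>x\<in>C. \<Sum>b\<in>B. F a b x)"
    by (rule sum.cong[OF refl], rule sum.swap)
  also have "\<dots> = (\<Sum>x\<in>C. \<Sum>a\<in>A. \<Sum>b\<in>B. F a b x)" by (rule sum.swap)
  finally show ?thesis .
qed

lemma compiled_eq:
  fixes M :: "('n::finite) lbl \<Rightarrow> 'n op \<Rightarrow> 'n op"
  assumes d: "d \<ge> 1" and qi: "quantum_instrument d M"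
  shows "compiled d M k \<rho> j l = (if j \<in> Zdn d \<and> l \<in> Zdn d \<and> j = l then
     (1 / of_int d ^ card (UNIV :: 'n set)) * (\<Sum>x\<in>Zdn d. \<Sum>m\<in>Zdn d.
        \<rho> (vadd d m x) (vadd d m x) * M (vsub d k x) (ketbra d m m) (vsub d j x) (vsub d j x)) else 0)"
proof -
  let ?D = "of_int d ^ card (UNIV :: 'n set) :: complex"
  have "compiled d M k \<rho> j l = (1 / ?D ^ 3) * (\<Sum>x\<in>Zdn d. \<Sum>a\<in>Zdn d. \<Sum>b\<in>Zdn d.
        conjm d (Xop d x) (conjm d (Zop d a)
          (M (vsub d k x) (conjm d (Zop d b) (conjm d (Xop d (vneg d x)) \<rho>)))) j l)"
    unfolding compiled_def by (subst swap3) (simp add: power_mult[symmetric] mult.commute)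
  also have "\<dots> = (if j \<in> Zdn d \<and> l \<in> Zdn d \<and> j = l then
     (1 / ?D) * (\<Sum>x\<in>Zdn d. \<Sum>m\<in>Zdn d.
        \<rho> (vadd d m x) (vadd d m x) * M (vsub d k x) (ketbra d m m) (vsub d j x) (vsub d j x)) else 0)"
  proof (cases "j \<in> Zdn d \<and> l \<in> Zdn d")
    case True
    have "\<And>x :: 'n lbl. x \<in> Zdn d \<Longrightarrow> (\<Sum>a\<in>Zdn d. \<Sum>b\<in>Zdn d.
        conjm d (Xop d x) (conjm d (Zop d a)
          (M (vsub d k x) (conjm d (Zop d b) (conjm d (Xop d (vneg d x)) \<rho>)))) j l)
       = (if j = l then ?D * ?D * (\<Sum>m\<in>Zdn d.
        \<rho> (vadd d m x) (vadd d m x) * M (vsub d k x) (ketbra d m m) (vsub d j x) (vsub d j x)) else 0)"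
    proof -
      fix x :: "'n lbl" assume x: "x \<in> Zdn d"
      have lin: "linear_map d (M (vsub d k x))" using qi_lin[OF qi] d by simp
      show "?thesis x"
        using True d
        by (simp add: conjX[OF d] twirl_full[OF d lin] vsub_inj vsub_vneg sum_distrib_left mult_ac)
    qed
    hence "(\<Sum>x\<in>Zdn d. \<Sum>a\<in>Zdn d. \<Sum>b\<in>Zdn d.
        conjm d (Xop d x) (conjm d (Zop d a)
          (M (vsub d k x) (conjm d (Zop d b) (conjm d (Xop d (vneg d x)) \<rho>)))) j l)
       = (\<Sum>x\<in>Zdn d. if j = l then ?D * ?D * (\<Sum>m\<in>Zdn d.
        \<rho> (vadd d m x) (vadd d m x) * M (vsub d k x) (ketbra d m m) (vsub d j x) (vsub d j x)) else 0)"
      by (rule sum.cong[OF refl])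
    also have "\<dots> = (if j = l then ?D * ?D * (\<Sum>x\<in>Zdn d. \<Sum>m\<in>Zdn d.
        \<rho> (vadd d m x) (vadd d m x) * M (vsub d k x) (ketbra d m m) (vsub d j x) (vsub d j x)) else 0)"
      by (simp add: sum_distrib_left)
    finally have eq: "(\<Sum>x\<in>Zdn d. \<Sum>a\<in>Zdn d. \<Sum>b\<in>Zdn d.
        conjm d (Xop d x) (conjm d (Zop d a)
          (M (vsub d k x) (conjm d (Zop d b) (conjm d (Xop d (vneg d x)) \<rho>)))) j l) = \<dots>" .
    have Dnz: "?D \<noteq> 0" using d by simp
    show ?thesis using True unfolding eq
      by (cases "j = l") (simp_all add: Dnz power3_eq_cube)
  next
    case False
    thus ?thesis by (auto simp: conjX[OF d])
  qed
  finally show ?thesis .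
qed

lemma chi_vadd: "d \<ge> 1 \<Longrightarrow> chi d z (vadd d x y) = chi d z x * chi d z y"
proof -
  assume d: "d \<ge> 1"
  have "d dvd (dot z (vadd d x y) - dot z (\<lambda>i. x i + y i))"
    by (intro dot_cong) (simp add: vadd_def mod_eq_dvd_iff[symmetric] mod_simps)
  hence "ee d (dot z (vadd d x y)) = ee d (dot z (\<lambda>i. x i + y i))" by (rule ee_cong[OF d])
  also have "dot z (\<lambda>i. x i + y i) = dot z x + dot z y" by (simp add: dot_def distrib_left sum.distrib)
  finally show ?thesis by (simp add: chi_ee ee_add)
qed

lemma chi_vsub: "d \<ge> 1 \<Longrightarrow> chi d z (vsub d x y) = chi d z x * cnj (chi d z y)"
proof -
  assume d: "d \<ge> 1"
  have "d dvd (dot z (vsub d x y) - dot z (\<lambda>i. x i - y i))"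
    by (intro dot_cong) (simp add: vsub_def mod_eq_dvd_iff[symmetric] mod_simps)
  hence "ee d (dot z (vsub d x y)) = ee d (dot z (\<lambda>i. x i - y i))" by (rule ee_cong[OF d])
  also have "dot z (\<lambda>i. x i - y i) = dot z x - dot z y" by (simp add: dot_def right_diff_distrib sum_subtractf)
  finally show ?thesis by (simp add: chi_ee ee_diff)
qed

lemma chi_comm: "chi d z j = chi d j z"
  by (simp add: chi_ee dot_comm)

lemma chi_cnj1: "chi d z j * cnj (chi d z j) = 1"
  by (simp add: chi_def cis_cnj cis_mult)

lemma vadd_comm: "vadd d x y = vadd d y x"
  by (simp add: vadd_def add.commute)

lemma Zop_expand: "Zop d s = (\<lambda>j l. \<Sum>m\<in>Zdn d. chi d s m * ketbra d m m j l)"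
  by (intro ext) (auto simp: Zop_def ketbra_def mult_if0 sum.delta cong: if_cong intro!: sum.neutral)

lemma tr_Zadj: "tr d (mmul d (adj (Zop d t)) Y) = (\<Sum>b\<in>Zdn d. cnj (chi d t b) * Y b b)"
  unfolding tr_def mmul_def adj_def Zop_def
  by (simp add: cnj_if if0_mult sum.delta cong: if_cong)

definition QQ :: "int \<Rightarrow> (('n::finite) lbl \<Rightarrow> 'n op \<Rightarrow> 'n op) \<Rightarrow> 'n lbl \<Rightarrow> 'n lbl \<Rightarrow> complex" where
  "QQ d M a b = (1 / of_int d ^ card (UNIV :: 'n set)) *
     (\<Sum>k'\<in>Zdn d. M k' (ketbra d (vadd d k' a) (vadd d k' a)) (vadd d k' b) (vadd d k' b))"

lemma phase1:
  assumes d: "d \<ge> 1"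
  shows "cnj (chi d k' (vsub d s t)) * cnj (chi d t (vadd d k' b)) * chi d s (vadd d k' a)
     = chi d s a * cnj (chi d t b)"
proof -
  have "cnj (chi d k' (vsub d s t)) * cnj (chi d t (vadd d k' b)) * chi d s (vadd d k' a)
     = (chi d s a * cnj (chi d t b)) * ((chi d s k' * cnj (chi d s k')) * (chi d t k' * cnj (chi d t k')))"
    by (simp add: chi_vsub[OF d] chi_vadd[OF d] chi_comm[of d k'] mult_ac)
  thus ?thesis by (simp add: chi_cnj1)
qed

lemma NT:
  fixes M :: "('n::finite) lbl \<Rightarrow> 'n op \<Rightarrow> 'n op"
  assumes d: "d \<ge> 1" and qi: "quantum_instrument d M"
  shows "nu_tilde d M s t = (\<Sum>a\<in>Zdn d. \<Sum>b\<in>Zdn d. chi d s a * cnj (chi d t b) * QQ d M a b)"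
proof -
  let ?D = "of_int d ^ card (UNIV :: 'n set) :: complex"
  have inner: "cnj (chi d k' (vsub d s t)) * tr d (mmul d (adj (Zop d t)) (M k' (Zop d s)))
     = (\<Sum>b\<in>Zdn d. \<Sum>a\<in>Zdn d. chi d s a * cnj (chi d t b) *
          M k' (ketbra d (vadd d k' a) (vadd d k' a)) (vadd d k' b) (vadd d k' b))"
    if k': "k' \<in> Zdn d" for k'
  proof -
    have lin: "linear_map d (M k')" using qi_lin[OF qi k'] .
    have ops: "\<forall>m\<in>Zdn d. is_op d (ketbra d m m)" by (simp add: is_op_ketbra)
    have MZ: "M k' (Zop d s) = (\<lambda>j l. \<Sum>m\<in>Zdn d. chi d s m * M k' (ketbra d m m) j l)"
      unfolding Zop_expand by (rule lin_sum[OF lin finite_Zdn[of d] ops])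
    have "cnj (chi d k' (vsub d s t)) * tr d (mmul d (adj (Zop d t)) (M k' (Zop d s)))
       = (\<Sum>b\<in>Zdn d. \<Sum>m\<in>Zdn d. cnj (chi d k' (vsub d s t)) * cnj (chi d t b) * chi d s m * M k' (ketbra d m m) b b)"
      by (simp add: tr_Zadj MZ sum_distrib_left mult_ac)
    also have "\<dots> = (\<Sum>b\<in>Zdn d. \<Sum>m\<in>Zdn d. cnj (chi d k' (vsub d s t)) * cnj (chi d t (vadd d k' b)) * chi d s (vadd d k' m) * M k' (ketbra d (vadd d k' m) (vadd d k' m)) (vadd d k' b) (vadd d k' b))"
    proof -
      have "\<And>b. (\<Sum>m\<in>Zdn d. cnj (chi d k' (vsub d s t)) * cnj (chi d t b) * chi d s m * M k' (ketbra d m m) b b)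
         = (\<Sum>m\<in>Zdn d. cnj (chi d k' (vsub d s t)) * cnj (chi d t b) * chi d s (vadd d k' m) * M k' (ketbra d (vadd d k' m) (vadd d k' m)) b b)"
        using sum_shift[OF d, of "\<lambda>m. cnj (chi d k' (vsub d s t)) * cnj (chi d t _) * chi d s m * M k' (ketbra d m m) _ _" k']
        by (simp add: vadd_comm[of d _ k'])
      hence "(\<Sum>b\<in>Zdn d. \<Sum>m\<in>Zdn d. cnj (chi d k' (vsub d s t)) * cnj (chi d t b) * chi d s m * M k' (ketbra d m m) b b)
         = (\<Sum>b\<in>Zdn d. \<Sum>m\<in>Zdn d. cnj (chi d k' (vsub d s t)) * cnj (chi d t b) * chi d s (vadd d k' m) * M k' (ketbra d (vadd d k' m) (vadd d k' m)) b b)"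
        by simp
      also have "\<dots> = (\<Sum>b\<in>Zdn d. \<Sum>m\<in>Zdn d. cnj (chi d k' (vsub d s t)) * cnj (chi d t (vadd d k' b)) * chi d s (vadd d k' m) * M k' (ketbra d (vadd d k' m) (vadd d k' m)) (vadd d k' b) (vadd d k' b))"
        using sum_shift[OF d, of "\<lambda>b. \<Sum>m\<in>Zdn d. cnj (chi d k' (vsub d s t)) * cnj (chi d t b) * chi d s (vadd d k' m) * M k' (ketbra d (vadd d k' m) (vadd d k' m)) b b" k']
        by (simp add: vadd_comm[of d _ k'])
      finally show ?thesis .
    qed
    also have "\<dots> = (\<Sum>b\<in>Zdn d. \<Sum>a\<in>Zdn d. chi d s a * cnj (chi d t b) *
          M k' (ketbra d (vadd d k' a) (vadd d k' a)) (vadd d k' b) (vadd d k' b))"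
      by (simp add: phase1[OF d])
    finally show ?thesis .
  qed
  have "nu_tilde d M s t = (1 / ?D) * (\<Sum>k'\<in>Zdn d. \<Sum>b\<in>Zdn d. \<Sum>a\<in>Zdn d. chi d s a * cnj (chi d t b) *
          M k' (ketbra d (vadd d k' a) (vadd d k' a)) (vadd d k' b) (vadd d k' b))"
    unfolding nu_tilde_def using inner by (simp cong: sum.cong)
  also have "\<dots> = (1 / ?D) * (\<Sum>a\<in>Zdn d. \<Sum>b\<in>Zdn d. \<Sum>k'\<in>Zdn d. chi d s a * cnj (chi d t b) *
          M k' (ketbra d (vadd d k' a) (vadd d k' a)) (vadd d k' b) (vadd d k' b))"
    by (subst swap3[symmetric], subst sum.swap, rule refl)
  also have "\<dots> = (\<Sum>a\<in>Zdn d. \<Sum>b\<in>Zdn d. chi d s a * cnj (chi d t b) * QQ d M a b)"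
    by (simp add: QQ_def sum_distrib_left mult_ac)
  finally show ?thesis .
qed

lemma swap4: "(\<Sum>s\<in>A. \<Sum>t\<in>B. \<Sum>a\<in>C. \<Sum>b\<in>E. F s t a b) = (\<Sum>a\<in>C. \<Sum>b\<in>E. \<Sum>s\<in>A. \<Sum>t\<in>B. (F s t a b :: complex))"
proof -
  have "(\<Sum>s\<in>A. \<Sum>t\<in>B. \<Sum>a\<in>C. \<Sum>b\<in>E. F s t a b) = (\<Sum>s\<in>A. \<Sum>a\<in>C. \<Sum>b\<in>E. \<Sum>t\<in>B. F s t a b)"
    by (rule sum.cong[OF refl], rule swap3[symmetric])
  also have "\<dots> = (\<Sum>a\<in>C. \<Sum>b\<in>E. \<Sum>s\<in>A. \<Sum>t\<in>B. F s t a b)"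
    by (rule swap3[symmetric])
  finally show ?thesis .
qed

lemma sep:
  "(\<Sum>s\<in>A. \<Sum>t\<in>B. f s * g t * (\<Sum>a\<in>C. \<Sum>b\<in>E. u s a * v t b * Q a b)) =
   (\<Sum>a\<in>C. \<Sum>b\<in>E. Q a b * (\<Sum>s\<in>A. f s * u s a) * (\<Sum>t\<in>B. g t * v t b :: complex))"
proof -
  have "(\<Sum>s\<in>A. \<Sum>t\<in>B. f s * g t * (\<Sum>a\<in>C. \<Sum>b\<in>E. u s a * v t b * Q a b)) =
     (\<Sum>s\<in>A. \<Sum>t\<in>B. \<Sum>a\<in>C. \<Sum>b\<in>E. Q a b * (f s * u s a) * (g t * v t b))"
    by (simp add: sum_distrib_left mult_ac)
  also have "\<dots> = (\<Sum>a\<in>C. \<Sum>b\<in>E. \<Sum>s\<in>A. \<Sum>t\<in>B. Q a b * (f s * u s a) * (g t * v t b))"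
    by (rule swap4)
  also have "\<dots> = (\<Sum>a\<in>C. \<Sum>b\<in>E. Q a b * (\<Sum>s\<in>A. f s * u s a) * (\<Sum>t\<in>B. g t * v t b))"
    by (simp add: sum_product sum_distrib_left mult_ac)
  finally show ?thesis .
qed

lemma NU:
  fixes M :: "('n::finite) lbl \<Rightarrow> 'n op \<Rightarrow> 'n op"
  assumes d: "d \<ge> 1" and qi: "quantum_instrument d M" and a: "a \<in> Zdn d" and b: "b \<in> Zdn d"
  shows "nu d M a b = QQ d M a b"
proof -
  let ?D = "of_int d ^ card (UNIV :: 'n set) :: complex"
  have "(\<Sum>s\<in>Zdn d. \<Sum>t\<in>Zdn d. nu_tilde d M s t * cnj (chi d s a) * chi d t b)
     = (\<Sum>s\<in>Zdn d. \<Sum>t\<in>Zdn d. cnj (chi d s a) * chi d t b *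
          (\<Sum>a'\<in>Zdn d. \<Sum>b'\<in>Zdn d. chi d s a' * cnj (chi d t b') * QQ d M a' b'))"
    by (simp add: NT[OF d qi] mult_ac)
  also have "\<dots> = (\<Sum>a'\<in>Zdn d. \<Sum>b'\<in>Zdn d. QQ d M a' b' * (\<Sum>s\<in>Zdn d. cnj (chi d s a) * chi d s a')
       * (\<Sum>t\<in>Zdn d. chi d t b * cnj (chi d t b')))"
    by (rule sep)
  also have "\<dots> = (\<Sum>a'\<in>Zdn d. \<Sum>b'\<in>Zdn d. QQ d M a' b' * (if a' = a then ?D else 0) * (if b = b' then ?D else 0))"
  proof (intro sum.cong refl)
    fix a' b' :: "'n lbl" assume a': "a' \<in> Zdn d" and b': "b' \<in> Zdn d"
    have "(\<Sum>s\<in>Zdn d. cnj (chi d s a) * chi d s a') = (if a' = a then ?D else 0)"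
      using chi_orth[OF d a' a] by (simp add: mult.commute)
    moreover have "(\<Sum>t\<in>Zdn d. chi d t b * cnj (chi d t b')) = (if b = b' then ?D else 0)"
      using chi_orth[OF d b b'] by simp
    ultimately show "QQ d M a' b' * (\<Sum>s\<in>Zdn d. cnj (chi d s a) * chi d s a')
       * (\<Sum>t\<in>Zdn d. chi d t b * cnj (chi d t b')) = QQ d M a' b' * (if a' = a then ?D else 0) * (if b = b' then ?D else 0)"
      by simp
  qed
  also have "\<dots> = ?D * ?D * QQ d M a b"
    using a b by (simp add: mult_if0 if0_mult sum.delta sum.delta' cong: if_cong)
  finally have eq: "(\<Sum>s\<in>Zdn d. \<Sum>t\<in>Zdn d. nu_tilde d M s t * cnj (chi d s a) * chi d t b) = ?D * ?D * QQ d M a b" .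
  have Dnz: "?D \<noteq> 0" using d by simp
  show ?thesis unfolding nu_def eq using Dnz by (simp add: power_mult mult.commute[of 2] power2_eq_square)
qed

definition HH :: "int \<Rightarrow> (('n::finite) lbl \<Rightarrow> 'n op \<Rightarrow> 'n op) \<Rightarrow> 'n lbl \<Rightarrow> 'n op \<Rightarrow> 'n lbl \<Rightarrow> 'n lbl \<Rightarrow> complex" where
  "HH d M k \<rho> j l = (\<Sum>a\<in>Zdn d. \<Sum>b\<in>Zdn d. QQ d M a b * \<rho> (vadd d k a) (vadd d k a) *
      (if l = j \<and> j = vadd d k b then 1 else 0))"

lemma HH_alt:
  assumes d: "d \<ge> 1"
  shows "HH d M k \<rho> j l = (if l = j \<and> j \<in> Zdn d then
     (\<Sum>a\<in>Zdn d. QQ d M a (vsub d j k) * \<rho> (vadd d k a) (vadd d k a)) else 0)"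
proof (cases "l = j \<and> j \<in> Zdn d")
  case True
  have "\<And>b. b \<in> Zdn d \<Longrightarrow> (j = vadd d k b) = (b = vsub d j k)"
    using True vadd_eq_iff[OF d] vadd_comm by metis
  hence "HH d M k \<rho> j l = (\<Sum>a\<in>Zdn d. \<Sum>b\<in>Zdn d. if b = vsub d j k then QQ d M a b * \<rho> (vadd d k a) (vadd d k a) else 0)"
    unfolding HH_def using True by (intro sum.cong refl) auto
  also have "\<dots> = (\<Sum>a\<in>Zdn d. QQ d M a (vsub d j k) * \<rho> (vadd d k a) (vadd d k a))"
    using d by (simp add: sum.delta)
  finally show ?thesis using True by simp
next
  case False
  have z: "\<And>b. (if l = j \<and> j = vadd d k b then (1::complex) else 0) = 0" using False d by auto
  show ?thesis unfolding HH_def if_not_P[OF False] by (simp add: z)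
qed

lemma RHS2_eq:
  fixes M :: "('n::finite) lbl \<Rightarrow> 'n op \<Rightarrow> 'n op"
  assumes d: "d \<ge> 1" and qi: "quantum_instrument d M"
  shows "(\<Sum>a\<in>Zdn d. \<Sum>b\<in>Zdn d.
           nu d M a b * \<rho> (vadd d k a) (vadd d k a) * ketbra d (vadd d k b) (vadd d k b) j l) = HH d M k \<rho> j l"
  unfolding HH_def
proof (intro sum.cong refl)
  fix a b :: "'n lbl" assume a: "a \<in> Zdn d" and b: "b \<in> Zdn d"
  show "nu d M a b * \<rho> (vadd d k a) (vadd d k a) * ketbra d (vadd d k b) (vadd d k b) j l =
        QQ d M a b * \<rho> (vadd d k a) (vadd d k a) * (if l = j \<and> j = vadd d k b then 1 else 0)"
    using d by (auto simp: NU[OF d qi a b] ketbra_def)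
qed

lemma C1:
  fixes M :: "('n::finite) lbl \<Rightarrow> 'n op \<Rightarrow> 'n op"
  assumes d: "d \<ge> 1" and k: "k \<in> Zdn d" and j: "j \<in> Zdn d"
  shows "(1 / of_int d ^ card (UNIV :: 'n set)) * (\<Sum>x\<in>Zdn d. \<Sum>m\<in>Zdn d.
        \<rho> (vadd d m x) (vadd d m x) * M (vsub d k x) (ketbra d m m) (vsub d j x) (vsub d j x))
     = (\<Sum>a\<in>Zdn d. QQ d M a (vsub d j k) * \<rho> (vadd d k a) (vadd d k a))"
proof -
  let ?D = "of_int d ^ card (UNIV :: 'n set) :: complex"
  let ?F = "\<lambda>k' a. \<rho> (vadd d k a) (vadd d k a) * M k' (ketbra d (vadd d k' a) (vadd d k' a)) (vadd d k' (vsub d j k)) (vadd d k' (vsub d j k))"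
  have "(\<Sum>a\<in>Zdn d. QQ d M a (vsub d j k) * \<rho> (vadd d k a) (vadd d k a))
      = (1 / ?D) * (\<Sum>a\<in>Zdn d. \<Sum>k'\<in>Zdn d. ?F k' a)"
    by (simp add: QQ_def sum_distrib_left sum_distrib_right mult_ac)
  also have "(\<Sum>a\<in>Zdn d. \<Sum>k'\<in>Zdn d. ?F k' a) = (\<Sum>k'\<in>Zdn d. \<Sum>a\<in>Zdn d. ?F k' a)"
    by (rule sum.swap)
  also have "\<dots> = (\<Sum>x\<in>Zdn d. \<Sum>a\<in>Zdn d. ?F (vsub d k x) a)"
  proof -
    have inv: "\<And>x. x \<in> Zdn d \<Longrightarrow> vsub d k (vsub d k x) = x"
      by (rule ext) (simp add: vsub_def mod_simps Zdn_mod)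
    have bij: "bij_betw (\<lambda>x. vsub d k x) (Zdn d) (Zdn d)"
      by (rule bij_betwI[where g="\<lambda>x. vsub d k x"]) (auto simp: inv d)
    show ?thesis using sum.reindex_bij_betw[OF bij, of "\<lambda>k'. \<Sum>a\<in>Zdn d. ?F k' a"] by simp
  qed
  also have "\<dots> = (\<Sum>x\<in>Zdn d. \<Sum>m\<in>Zdn d.
        \<rho> (vadd d m x) (vadd d m x) * M (vsub d k x) (ketbra d m m) (vsub d j x) (vsub d j x))"
  proof (rule sum.cong[OF refl])
    fix x :: "'n lbl" assume x: "x \<in> Zdn d"
    have bij: "bij_betw (\<lambda>m. vsub d (vadd d m x) k) (Zdn d) (Zdn d)"
    proof (rule bij_betwI[where g="\<lambda>a. vsub d (vadd d k a) x"])
      show "\<And>m. m \<in> Zdn d \<Longrightarrow> vsub d (vadd d k (vsub d (vadd d m x) k)) x = m"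
        by (rule ext) (simp add: vsub_def vadd_def mod_simps Zdn_mod)
      show "\<And>a. a \<in> Zdn d \<Longrightarrow> vsub d (vadd d (vsub d (vadd d k a) x) x) k = a"
        by (rule ext) (simp add: vsub_def vadd_def mod_simps Zdn_mod)
    qed (use d in auto)
    have i1: "vadd d k (vsub d (vadd d m x) k) = vadd d m x" for m
      by (rule ext) (simp add: vsub_def vadd_def mod_simps)
    have i2: "m \<in> Zdn d \<Longrightarrow> vadd d (vsub d k x) (vsub d (vadd d m x) k) = m" for m
      by (rule ext) (simp add: vsub_def vadd_def mod_simps Zdn_mod)
    have i3: "vadd d (vsub d k x) (vsub d j k) = vsub d j x"
      by (rule ext) (simp add: vsub_def vadd_def mod_simps)
    have "(\<Sum>a\<in>Zdn d. ?F (vsub d k x) a) = (\<Sum>m\<in>Zdn d. ?F (vsub d k x) (vsub d (vadd d m x) k))"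
      using sum.reindex_bij_betw[OF bij, of "\<lambda>a. ?F (vsub d k x) a"] by simp
    also have "\<dots> = (\<Sum>m\<in>Zdn d.
        \<rho> (vadd d m x) (vadd d m x) * M (vsub d k x) (ketbra d m m) (vsub d j x) (vsub d j x))"
      by (intro sum.cong refl) (simp add: i1 i2 i3)
    finally show "(\<Sum>a\<in>Zdn d. ?F (vsub d k x) a) = \<dots>" .
  qed
  finally show ?thesis by simp
qed

lemma compiled_HH:
  fixes M :: "('n::finite) lbl \<Rightarrow> 'n op \<Rightarrow> 'n op"
  assumes d: "d \<ge> 1" and qi: "quantum_instrument d M" and k: "k \<in> Zdn d"
  shows "compiled d M k \<rho> j l = HH d M k \<rho> j l"
proof (cases "l = j \<and> j \<in> Zdn d")
  case True
  then show ?thesis using compiled_eq[OF d qi, of k \<rho> j l] HH_alt[OF d, of M k \<rho> j l] C1[OF d k, of j \<rho> M] by auto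
next
  case False
  then show ?thesis using compiled_eq[OF d qi, of k \<rho> j l] HH_alt[OF d, of M k \<rho> j l] by auto
qed

lemma alpha:
  fixes \<rho> :: "('n::finite) op"
  assumes d: "d \<ge> 1" and k: "k \<in> Zdn d" and a: "a \<in> Zdn d"
  shows "(\<Sum>s\<in>Zdn d. chi d s k * tr d (mmul d (adj (Zop d s)) \<rho>) * chi d s a)
     = of_int d ^ card (UNIV :: 'n set) * \<rho> (vadd d k a) (vadd d k a)"
proof -
  have "(\<Sum>s\<in>Zdn d. chi d s k * tr d (mmul d (adj (Zop d s)) \<rho>) * chi d s a)
     = (\<Sum>s\<in>Zdn d. \<Sum>m\<in>Zdn d. \<rho> m m * (chi d s (vadd d k a) * cnj (chi d s m)))"
    by (simp add: tr_Zadj chi_vadd[OF d] sum_distrib_left sum_distrib_right mult_ac)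
  also have "\<dots> = (\<Sum>m\<in>Zdn d. \<rho> m m * (\<Sum>s\<in>Zdn d. chi d s (vadd d k a) * cnj (chi d s m)))"
    by (subst sum.swap) (simp add: sum_distrib_left)
  also have "\<dots> = (\<Sum>m\<in>Zdn d. \<rho> m m * (if vadd d k a = m then of_int d ^ card (UNIV :: 'n set) else 0))"
    by (intro sum.cong refl) (simp add: chi_orth[OF d] d)
  also have "\<dots> = of_int d ^ card (UNIV :: 'n set) * \<rho> (vadd d k a) (vadd d k a)"
    using d by (simp add: mult_if0 sum.delta mult.commute cong: if_cong)
  finally show ?thesis .
qed

lemma beta:
  fixes j l k b :: "('n::finite) lbl"
  assumes d: "d \<ge> 1" and k: "k \<in> Zdn d" and b: "b \<in> Zdn d"
  shows "(\<Sum>t\<in>Zdn d. cnj (chi d t k) * Zop d t j l * cnj (chi d t b))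
     = of_int d ^ card (UNIV :: 'n set) * (if l = j \<and> j = vadd d k b then 1 else 0)"
proof (cases "l = j \<and> j \<in> Zdn d")
  case True
  have "(\<Sum>t\<in>Zdn d. cnj (chi d t k) * Zop d t j l * cnj (chi d t b))
      = (\<Sum>t\<in>Zdn d. chi d t j * cnj (chi d t (vadd d k b)))"
    using True by (simp add: Zop_def chi_vadd[OF d] mult_ac)
  also have "\<dots> = (if j = vadd d k b then of_int d ^ card (UNIV :: 'n set) else 0)"
    using True by (simp add: chi_orth[OF d] d)
  finally show ?thesis using True by simp
next
  case False
  hence z: "\<And>t. Zop d t j l = 0" by (auto simp: Zop_def)
  have nc: "\<not> (l = j \<and> j = vadd d k b)" using False d by auto
  show ?thesis unfolding if_not_P[OF nc] by (simp add: z)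
qed

lemma RHS1_eq:
  fixes M :: "('n::finite) lbl \<Rightarrow> 'n op \<Rightarrow> 'n op"
  assumes d: "d \<ge> 1" and qi: "quantum_instrument d M" and k: "k \<in> Zdn d"
  shows "(1 / of_int d ^ (2 * card (UNIV :: 'n set))) *
           (\<Sum>s\<in>Zdn d. \<Sum>t\<in>Zdn d. chi d k (vsub d s t) * nu_tilde d M s t
              * tr d (mmul d (adj (Zop d s)) \<rho>) * Zop d t j l) = HH d M k \<rho> j l"
proof -
  let ?D = "of_int d ^ card (UNIV :: 'n set) :: complex"
  have cv: "\<And>s t. chi d k (vsub d s t) = chi d s k * cnj (chi d t k)"
    using chi_vsub[OF d] chi_comm by metis
  have "(\<Sum>s\<in>Zdn d. \<Sum>t\<in>Zdn d. chi d k (vsub d s t) * nu_tilde d M s t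
              * tr d (mmul d (adj (Zop d s)) \<rho>) * Zop d t j l)
     = (\<Sum>s\<in>Zdn d. \<Sum>t\<in>Zdn d. (chi d s k * tr d (mmul d (adj (Zop d s)) \<rho>)) * (cnj (chi d t k) * Zop d t j l) *
          (\<Sum>a\<in>Zdn d. \<Sum>b\<in>Zdn d. chi d s a * cnj (chi d t b) * QQ d M a b))"
    by (simp add: cv NT[OF d qi] mult_ac)
  also have "\<dots> = (\<Sum>a\<in>Zdn d. \<Sum>b\<in>Zdn d. QQ d M a b * (\<Sum>s\<in>Zdn d. chi d s k * tr d (mmul d (adj (Zop d s)) \<rho>) * chi d s a)
       * (\<Sum>t\<in>Zdn d. cnj (chi d t k) * Zop d t j l * cnj (chi d t b)))"
    by (rule sep)
  also have "\<dots> = (\<Sum>a\<in>Zdn d. \<Sum>b\<in>Zdn d. QQ d M a b * (?D * \<rho> (vadd d k a) (vadd d k a))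
       * (?D * (if l = j \<and> j = vadd d k b then 1 else 0)))"
    by (intro sum.cong refl) (simp add: alpha[OF d k] beta[OF d k])
  also have "\<dots> = ?D * ?D * HH d M k \<rho> j l"
    unfolding HH_def by (simp add: sum_distrib_left mult_ac)
  finally have eq: "(\<Sum>s\<in>Zdn d. \<Sum>t\<in>Zdn d. chi d k (vsub d s t) * nu_tilde d M s t
              * tr d (mmul d (adj (Zop d s)) \<rho>) * Zop d t j l) = ?D * ?D * HH d M k \<rho> j l" .
  have Dnz: "?D \<noteq> 0" using d by simp
  show ?thesis unfolding eq using Dnz by (simp add: power_mult mult.commute[of 2] power2_eq_square)
qed

theorem theorem2:
  fixes d :: int and M :: "('n::finite) lbl \<Rightarrow> 'n op \<Rightarrow> 'n op"
    and k :: "'n lbl" and \<rho> :: "'n op"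
  assumes "d \<ge> 1"
    and "quantum_instrument d M"
    and "k \<in> Zdn d"
    and "is_op d \<rho>"
  shows "compiled d M k \<rho> = (\<lambda>j l. (1 / of_int d ^ (2 * card (UNIV :: 'n set))) *
           (\<Sum>s\<in>Zdn d. \<Sum>t\<in>Zdn d. chi d k (vsub d s t) * nu_tilde d M s t
              * tr d (mmul d (adj (Zop d s)) \<rho>) * Zop d t j l)) \<and>
         compiled d M k \<rho> = (\<lambda>j l. \<Sum>a\<in>Zdn d. \<Sum>b\<in>Zdn d.
           nu d M a b * \<rho> (vadd d k a) (vadd d k a) * ketbra d (vadd d k b) (vadd d k b) j l)"
  using compiled_HH[OF assms(1,2,3)] RHS1_eq[OF assms(1,2,3)] RHS2_eq[OF assms(1,2)]
  by (simp add: fun_eq_iff)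

end
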